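(* Let $n\ge2$ and $D=\mathrm{pdiag}(d_1,\dots,d_n)$ with $d_1\le\dots\le d_n$. If $n=2$ and $d_2<0$, then $\mathrm{attr}(D)=\{x\in\overline{\mathbb{R}}^2: x_1=x_2\}$, so $D$ is not strongly stable. In all other cases $D$ is strongly stable.
   Context: Max-plus conventions: $\overline{\mathbb{R}}=\mathbb{R}\cup\{-\infty\}$, $\varepsilon=-\infty$, $\oplus=\max$, $\otimes=+$; $(A\otimes x)_i=\max_j(A_{ij}+x_j)$, $(\lambda\otimes x)_i=\lambda+x_i$, $A^k$ is the $k$-fold max-plus power and $A^0\otimes x=x$. $\mathrm{pdiag}(d_1,\dots,d_n)$ is the matrix with real diagonal entries $d_i$ and all off-diagonal entries equal to the real number $0$. For finite $A\in\mathbb{R}^{n\times n}$, $\lambda(A)$ is the maximum cycle mean, $\lambda(A)=\max\{(a_{i_1i_2}+\dots+a_{i_ki_1})/k\}$ over $k\ge1$ and distinct $i_1,\dots,i_k\in[n]$; it is the unique max-plus eigenvalue of $A$. The eigenspace is $V(A)=\{x\in\overline{\mathbb{R}}^n: A\otimes x=\lambda(A)\otimes x\}$ (including the all-$\varepsilon$ vector). $\mathrm{attr}(A)=\{x\in\overline{\mathbb{R}}^n: A^k\otimes x\in V(A)\text{ for some } k\ge0\}$; $A$ is strongly stable if $\mathrm{attr}(A)=\overline{\mathbb{R}}^n$. *)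

theory Defs
  imports Complex_Main "HOL-Library.Extended_Real"
begin

text \<open>Max-plus algebra over \<open>R \<union> {-\<infinity>}\<close>, modelled inside \<open>ereal\<close> (the value \<open>\<infinity>\<close> never
  occurs).  Dimension \<open>n\<close> is explicit; indices are \<open>0..<n\<close> (paper index \<open>i\<close> is \<open>i-1\<close> here).
  A vector of \<open>Rbar^n\<close> is a function \<open>nat \<Rightarrow> ereal\<close> with values \<noteq> \<infinity> on \<open>{..<n}\<close>
  and value \<open>-\<infinity>\<close> outside \<open>{..<n}\<close> (extensional convention).\<close>

definition mp_vecs :: "nat \<Rightarrow> (nat \<Rightarrow> ereal) set" where
  "mp_vecs n = {x. (\<forall>i<n. x i \<noteq> \<infinity>) \<and> (\<forall>i. n \<le> i \<longrightarrow> x i = -\<infinity>)}"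

definition mp_mat_mult :: "nat \<Rightarrow> (nat \<Rightarrow> nat \<Rightarrow> ereal) \<Rightarrow> (nat \<Rightarrow> nat \<Rightarrow> ereal) \<Rightarrow> nat \<Rightarrow> nat \<Rightarrow> ereal" where
  "mp_mat_mult n A B = (\<lambda>i j. if i < n \<and> j < n then Max ((\<lambda>l. A i l + B l j) ` {..<n}) else -\<infinity>)"

definition mp_id :: "nat \<Rightarrow> nat \<Rightarrow> nat \<Rightarrow> ereal" where
  "mp_id n = (\<lambda>i j. if i < n \<and> j < n then (if i = j then 0 else -\<infinity>) else -\<infinity>)"

definition mp_of_real :: "nat \<Rightarrow> (nat \<Rightarrow> nat \<Rightarrow> real) \<Rightarrow> nat \<Rightarrow> nat \<Rightarrow> ereal" where
  "mp_of_real n A = (\<lambda>i j. if i < n \<and> j < n then ereal (A i j) else -\<infinity>)"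

fun mp_mat_pow :: "nat \<Rightarrow> (nat \<Rightarrow> nat \<Rightarrow> real) \<Rightarrow> nat \<Rightarrow> nat \<Rightarrow> nat \<Rightarrow> ereal" where
  "mp_mat_pow n A 0 = mp_id n"
| "mp_mat_pow n A (Suc k) = mp_mat_mult n (mp_of_real n A) (mp_mat_pow n A k)"

definition mp_apply :: "nat \<Rightarrow> (nat \<Rightarrow> nat \<Rightarrow> ereal) \<Rightarrow> (nat \<Rightarrow> ereal) \<Rightarrow> nat \<Rightarrow> ereal" where
  "mp_apply n A x = (\<lambda>i. if i < n then Max ((\<lambda>j. A i j + x j) ` {..<n}) else -\<infinity>)"

definition mp_scale :: "nat \<Rightarrow> real \<Rightarrow> (nat \<Rightarrow> ereal) \<Rightarrow> nat \<Rightarrow> ereal" where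
  "mp_scale n c x = (\<lambda>i. if i < n then ereal c + x i else -\<infinity>)"

definition cycle_mean :: "(nat \<Rightarrow> nat \<Rightarrow> real) \<Rightarrow> nat list \<Rightarrow> real" where
  "cycle_mean A cs = (\<Sum>t<length cs. A (cs ! t) (cs ! ((t + 1) mod length cs))) / real (length cs)"

definition mcm :: "nat \<Rightarrow> (nat \<Rightarrow> nat \<Rightarrow> real) \<Rightarrow> real" where
  "mcm n A = Max {cycle_mean A cs | cs. cs \<noteq> [] \<and> distinct cs \<and> set cs \<subseteq> {..<n}}"

definition eigenspace :: "nat \<Rightarrow> (nat \<Rightarrow> nat \<Rightarrow> real) \<Rightarrow> (nat \<Rightarrow> ereal) set" where
  "eigenspace n A = {x \<in> mp_vecs n. mp_apply n (mp_of_real n A) x = mp_scale n (mcm n A) x}"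

definition attr :: "nat \<Rightarrow> (nat \<Rightarrow> nat \<Rightarrow> real) \<Rightarrow> (nat \<Rightarrow> ereal) set" where
  "attr n A = {x \<in> mp_vecs n. \<exists>k. mp_apply n (mp_mat_pow n A k) x \<in> eigenspace n A}"

definition strongly_stable :: "nat \<Rightarrow> (nat \<Rightarrow> nat \<Rightarrow> real) \<Rightarrow> bool" where
  "strongly_stable n A \<longleftrightarrow> attr n A = mp_vecs n"

definition pdiag :: "(nat \<Rightarrow> real) \<Rightarrow> nat \<Rightarrow> nat \<Rightarrow> real" where
  "pdiag d = (\<lambda>i j. if i = j then d i else 0)"

end

theory Submission
  imports Defs
begin


lemma ereal_add_Max:
  fixes a :: ereal
  assumes "finite S" "S \<noteq> {}"
  shows "a + Max S = Max ((\<lambda>s. a + s) ` S)"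
  by (rule mono_Max_commute) (auto simp: mono_def add_left_mono assms)

lemma ereal_Max_add:
  fixes a :: ereal
  assumes "finite S" "S \<noteq> {}"
  shows "Max S + a = Max ((\<lambda>s. s + a) ` S)"
  by (rule mono_Max_commute) (auto simp: mono_def add_right_mono assms)

lemma Max_swap:
  fixes g :: "nat \<Rightarrow> nat \<Rightarrow> 'a::linorder"
  assumes "finite I" "I \<noteq> {}" "finite J" "J \<noteq> {}"
  shows "Max ((\<lambda>l. Max ((\<lambda>j. g l j) ` J)) ` I) = Max ((\<lambda>j. Max ((\<lambda>l. g l j) ` I)) ` J)"
proof (rule antisym)
  have 1: "g l j \<le> Max ((\<lambda>j. Max ((\<lambda>l. g l j) ` I)) ` J)" if "l \<in> I" "j \<in> J" for l j
  proof -
    have "g l j \<le> Max ((\<lambda>l. g l j) ` I)" using assms that by auto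
    also have "\<dots> \<le> Max ((\<lambda>j. Max ((\<lambda>l. g l j) ` I)) ` J)" using assms that by auto
    finally show ?thesis .
  qed
  show "Max ((\<lambda>l. Max ((\<lambda>j. g l j) ` J)) ` I) \<le> Max ((\<lambda>j. Max ((\<lambda>l. g l j) ` I)) ` J)"
    using assms 1 by simp
  have 2: "g l j \<le> Max ((\<lambda>l. Max ((\<lambda>j. g l j) ` J)) ` I)" if "l \<in> I" "j \<in> J" for l j
  proof -
    have "g l j \<le> Max ((\<lambda>j. g l j) ` J)" using assms that by auto
    also have "\<dots> \<le> Max ((\<lambda>l. Max ((\<lambda>j. g l j) ` J)) ` I)" using assms that by auto
    finally show ?thesis .
  qed
  show "Max ((\<lambda>j. Max ((\<lambda>l. g l j) ` I)) ` J) \<le> Max ((\<lambda>l. Max ((\<lambda>j. g l j) ` J)) ` I)"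
    using assms 2 by simp
qed

lemma mp_apply_mult:
  assumes "0 < n"
  shows "mp_apply n (mp_mat_mult n A B) x = mp_apply n A (mp_apply n B x)"
proof
  fix i
  show "mp_apply n (mp_mat_mult n A B) x i = mp_apply n A (mp_apply n B x) i"
  proof (cases "i < n")
    case False thus ?thesis by (simp add: mp_apply_def)
  next
    case True
    have ne: "{..<n} \<noteq> {}" using assms by auto
    have "mp_apply n (mp_mat_mult n A B) x i = Max ((\<lambda>j. Max ((\<lambda>l. A i l + B l j) ` {..<n}) + x j) ` {..<n})"
      using True by (simp add: mp_apply_def mp_mat_mult_def)
    also have "\<dots> = Max ((\<lambda>j. Max ((\<lambda>l. A i l + B l j + x j) ` {..<n})) ` {..<n})"
      using ne by (simp add: ereal_Max_add image_image)
    also have "\<dots> = Max ((\<lambda>l. Max ((\<lambda>j. A i l + B l j + x j) ` {..<n})) ` {..<n})"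
      using Max_swap[of "{..<n}" "{..<n}" "\<lambda>l j. A i l + B l j + x j"] ne by simp
    also have "\<dots> = Max ((\<lambda>l. A i l + Max ((\<lambda>j. B l j + x j) ` {..<n})) ` {..<n})"
      using ne by (simp add: ereal_add_Max image_image add.assoc)
    also have "\<dots> = mp_apply n A (mp_apply n B x) i"
      using True by (simp add: mp_apply_def)
    finally show ?thesis .
  qed
qed

lemma mp_apply_id:
  assumes "x \<in> mp_vecs n"
  shows "mp_apply n (mp_id n) x = x"
proof
  fix i
  show "mp_apply n (mp_id n) x i = x i"
  proof (cases "i < n")
    case False thus ?thesis using assms by (simp add: mp_apply_def mp_vecs_def)
  next
    case True
    have "mp_apply n (mp_id n) x i = Max ((\<lambda>j. (if i = j then 0 else -\<infinity>) + x j) ` {..<n})"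
      using True by (simp add: mp_apply_def mp_id_def)
    also have "\<dots> = x i"
    proof (rule Max_eqI)
      fix y assume "y \<in> (\<lambda>j. (if i = j then 0 else -\<infinity>) + x j) ` {..<n}"
      then obtain j where j: "j < n" "y = (if i = j then 0 else -\<infinity>) + x j" by auto
      show "y \<le> x i"
      proof (cases "i = j")
        case False
        have "x j \<noteq> \<infinity>" using assms j(1) by (simp add: mp_vecs_def)
        hence "y = -\<infinity>" using j False by simp
        thus ?thesis by simp
      qed (use j in simp)
    next
      show "x i \<in> (\<lambda>j. (if i = j then 0 else -\<infinity>) + x j) ` {..<n}"
        using True by (auto intro!: image_eqI[of _ _ i])
    qed simp
    finally show ?thesis .
  qed
qed

lemma mp_apply_pow:
  assumes "0 < n" "x \<in> mp_vecs n"
  shows "mp_apply n (mp_mat_pow n A k) x = (mp_apply n (mp_of_real n A) ^^ k) x"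
  by (induction k) (simp_all add: mp_apply_id assms mp_apply_mult)




lemma cycle_mean_le:
  assumes "2 \<le> n" and mono: "\<forall>i j. i \<le> j \<longrightarrow> j < n \<longrightarrow> d i \<le> d j"
    and cs: "cs \<noteq> []" "distinct cs" "set cs \<subseteq> {..<n}"
  shows "cycle_mean (pdiag d) cs \<le> max (d (n-1)) 0"
proof (cases "length cs = 1")
  case True
  then obtain a where a: "cs = [a]" by (cases cs) auto
  have "a < n" using cs a by auto
  hence "d a \<le> d (n-1)" using mono by auto
  thus ?thesis using a by (simp add: cycle_mean_def pdiag_def)
next
  case False
  hence len: "length cs \<ge> 2" using cs by (cases cs) (auto simp: Suc_le_eq)
  have "pdiag d (cs ! t) (cs ! ((t + 1) mod length cs)) = 0" if "t < length cs" for t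
  proof -
    have "t \<noteq> (t + 1) mod length cs"
    proof (cases "t + 1 < length cs")
      case True thus ?thesis by simp
    next
      case False
      hence "t + 1 = length cs" using that by simp
      thus ?thesis using len by simp
    qed
    moreover have "(t + 1) mod length cs < length cs" using len by (intro mod_less_divisor) linarith
    ultimately have "cs ! t \<noteq> cs ! ((t + 1) mod length cs)"
      using nth_eq_iff_index_eq[OF cs(2) that] by blast
    thus ?thesis by (simp add: pdiag_def)
  qed
  hence "cycle_mean (pdiag d) cs = 0" by (simp add: cycle_mean_def)
  thus ?thesis by simp
qed

lemma mcm_pdiag:
  assumes "2 \<le> n" and mono: "\<forall>i j. i \<le> j \<longrightarrow> j < n \<longrightarrow> d i \<le> d j"
  shows "mcm n (pdiag d) = max (d (n-1)) 0"
proof -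
  let ?C = "{cycle_mean (pdiag d) cs | cs. cs \<noteq> [] \<and> distinct cs \<and> set cs \<subseteq> {..<n}}"
  have fin: "finite ?C"
  proof -
    have "?C \<subseteq> cycle_mean (pdiag d) ` {cs. set cs \<subseteq> {..<n} \<and> length cs \<le> n}"
    proof
      fix c assume "c \<in> ?C"
      then obtain cs where "c = cycle_mean (pdiag d) cs" "distinct cs" "set cs \<subseteq> {..<n}" by auto
      moreover have "length cs \<le> n"
        using distinct_card[OF \<open>distinct cs\<close>] card_mono[OF _ \<open>set cs \<subseteq> {..<n}\<close>] by simp
      ultimately show "c \<in> cycle_mean (pdiag d) ` {cs. set cs \<subseteq> {..<n} \<and> length cs \<le> n}" by auto
    qed
    moreover have "finite {cs. set cs \<subseteq> {..<n} \<and> length cs \<le> n}"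
      by (rule finite_lists_length_le) simp
    ultimately show ?thesis by (meson finite_surj)
  qed
  have m1: "d (n-1) \<in> ?C"
  proof -
    have "cycle_mean (pdiag d) [n-1] = d (n-1)" by (simp add: cycle_mean_def pdiag_def)
    moreover have "[n-1] \<noteq> [] \<and> distinct [n-1] \<and> set [n-1] \<subseteq> {..<n}" using assms by auto
    ultimately show ?thesis by (metis (mono_tags, lifting) mem_Collect_eq)
  qed
  have m2: "0 \<in> ?C"
  proof -
    have "cycle_mean (pdiag d) [0,1] = 0" by (simp add: cycle_mean_def pdiag_def)
    moreover have "[0,1] \<noteq> [] \<and> distinct [0::nat,1] \<and> set [0::nat,1] \<subseteq> {..<n}" using assms by auto
    ultimately show ?thesis by (metis (mono_tags, lifting) mem_Collect_eq)
  qed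
  have "Max ?C = max (d (n-1)) 0"
  proof (rule Max_eqI[OF fin])
    fix y assume "y \<in> ?C"
    thus "y \<le> max (d (n-1)) 0" using cycle_mean_le[OF assms] by auto
  next
    show "max (d (n-1)) 0 \<in> ?C" using m1 m2 by (simp add: max_def)
  qed
  thus ?thesis by (simp add: mcm_def)
qed




definition Rv :: "nat \<Rightarrow> (nat \<Rightarrow> real) \<Rightarrow> (nat \<Rightarrow> real) \<Rightarrow> nat \<Rightarrow> real" where
  "Rv n d y i = Max ((\<lambda>j. pdiag d i j + y j) ` {..<n})"

definition Ev :: "nat \<Rightarrow> (nat \<Rightarrow> real) \<Rightarrow> nat \<Rightarrow> ereal" where
  "Ev n y = (\<lambda>i. if i < n then ereal (y i) else -\<infinity>)"

lemma Rv_diag: "i < n \<Longrightarrow> d i + y i \<le> Rv n d y i"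
  unfolding Rv_def by (rule Max_ge) (auto simp: pdiag_def intro!: image_eqI[of _ _ i])

lemma Rv_off: "j < n \<Longrightarrow> j \<noteq> i \<Longrightarrow> y j \<le> Rv n d y i"
  unfolding Rv_def by (rule Max_ge) (auto simp: pdiag_def intro!: image_eqI[of _ _ j])

lemma Rv_le:
  assumes "i < n" "d i + y i \<le> c" "\<forall>j<n. j \<noteq> i \<longrightarrow> y j \<le> c"
  shows "Rv n d y i \<le> c"
  unfolding Rv_def using assms by (subst Max_le_iff) (auto simp: pdiag_def)

lemma Rv_eqI:
  assumes "i < n" "d i + y i \<le> c" "\<forall>j<n. j \<noteq> i \<longrightarrow> y j \<le> c"
    and "d i + y i = c \<or> (\<exists>j<n. j \<noteq> i \<and> y j = c)"
  shows "Rv n d y i = c"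
proof -
  have le: "Rv n d y i \<le> c" using Rv_le[of i n d y c] assms by blast
  show ?thesis using assms(4)
  proof
    assume "d i + y i = c" thus ?thesis using le Rv_diag[OF assms(1), of d y] by linarith
  next
    assume "\<exists>j<n. j \<noteq> i \<and> y j = c"
    then obtain j where "j < n" "j \<noteq> i" "y j = c" by blast
    thus ?thesis using le Rv_off[of j n i y d] by linarith
  qed
qed

lemma Ev_mem: "Ev n y \<in> mp_vecs n"
  by (simp add: Ev_def mp_vecs_def)

lemma apply_Ev:
  "mp_apply n (mp_of_real n (pdiag d)) (Ev n y) = Ev n (Rv n d y)"
proof
  fix i
  show "mp_apply n (mp_of_real n (pdiag d)) (Ev n y) i = Ev n (Rv n d y) i"
  proof (cases "i < n")
    case True
    hence ne: "{..<n} \<noteq> {}" by auto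
    have "mp_apply n (mp_of_real n (pdiag d)) (Ev n y) i = Max ((\<lambda>j. ereal (pdiag d i j + y j)) ` {..<n})"
      unfolding mp_apply_def mp_of_real_def Ev_def
      apply (simp only: True if_True)
      apply (intro arg_cong[where f=Max] image_cong)
      using True by auto
    also have "\<dots> = ereal (Max ((\<lambda>j. pdiag d i j + y j) ` {..<n}))"
      using ne by (subst mono_Max_commute[where f=ereal]) (auto simp: mono_def image_image)
    finally show ?thesis using True by (simp add: Ev_def Rv_def)
  qed (simp add: mp_apply_def Ev_def)
qed

lemma funpow_Ev:
  "(mp_apply n (mp_of_real n (pdiag d)) ^^ k) (Ev n y) = Ev n ((Rv n d ^^ k) y)"
  by (induction k) (simp_all add: apply_Ev)

lemma Ev_eigen:
  "Ev n y \<in> eigenspace n (pdiag d) \<longleftrightarrow> (\<forall>i<n. Rv n d y i = mcm n (pdiag d) + y i)"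
proof -
  have "mp_scale n (mcm n (pdiag d)) (Ev n y) = Ev n (\<lambda>i. mcm n (pdiag d) + y i)"
    by (auto simp: mp_scale_def Ev_def)
  moreover have "Ev n u = Ev n v \<longleftrightarrow> (\<forall>i<n. u i = v i)" for u v
    by (auto simp: Ev_def fun_eq_iff)
  ultimately show ?thesis by (simp add: eigenspace_def Ev_mem apply_Ev)
qed

lemma apply_to_real:
  assumes "2 \<le> n" "x \<in> mp_vecs n" "p < n" "x p \<noteq> -\<infinity>"
  shows "mp_apply n (mp_of_real n (pdiag d)) x
           = Ev n (\<lambda>i. real_of_ereal (mp_apply n (mp_of_real n (pdiag d)) x i))"
proof
  fix i
  let ?T = "mp_apply n (mp_of_real n (pdiag d)) x"
  show "?T i = Ev n (\<lambda>i. real_of_ereal (?T i)) i"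
  proof (cases "i < n")
    case False thus ?thesis by (simp add: mp_apply_def Ev_def)
  next
    case True
    let ?S = "(\<lambda>j. mp_of_real n (pdiag d) i j + x j) ` {..<n}"
    have fin: "finite ?S" "?S \<noteq> {}" using True by auto
    have T: "?T i = Max ?S" using True by (simp add: mp_apply_def)
    have xp: "\<bar>x p\<bar> \<noteq> \<infinity>" using assms by (auto simp: mp_vecs_def)
    have "mp_of_real n (pdiag d) i p + x p \<in> ?S" using assms by auto
    moreover have "\<bar>mp_of_real n (pdiag d) i p + x p\<bar> \<noteq> \<infinity>"
      using xp True assms(3) by (cases "x p") (auto simp: mp_of_real_def)
    ultimately have "Max ?S \<noteq> -\<infinity>" using fin
      by (metis MInfty_neq_PInfty(1) Max_ge abs_ereal_uminus ereal_infty_less_eq(2) 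
          abs_ereal.simps(3))
    moreover have "Max ?S \<noteq> \<infinity>"
    proof -
      have "Max ?S \<in> ?S" using fin by (rule Max_in)
      then obtain j where "j < n" "Max ?S = mp_of_real n (pdiag d) i j + x j" by auto
      moreover have "x j \<noteq> \<infinity>" using assms \<open>j < n\<close> by (auto simp: mp_vecs_def)
      ultimately show ?thesis using True by (simp add: mp_of_real_def)
    qed
    ultimately have "ereal (real_of_ereal (Max ?S)) = Max ?S" by (cases "Max ?S") auto
    thus ?thesis using T True by (simp add: Ev_def)
  qed
qed




lemma Rv_const:
  assumes "2 \<le> n" "\<forall>i<n. d i \<le> 0" "\<forall>i<n. z i = c"
  shows "\<forall>i<n. Rv n d z i = c"
proof (intro allI impI)
  fix i assume i: "i < n"
  define j where "j = (if i = 0 then 1 else (0::nat))"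
  have "j < n" "j \<noteq> i" using assms(1) by (auto simp: j_def)
  thus "Rv n d z i = c" using assms i by (intro Rv_eqI) auto
qed

lemma caseA:
  assumes "3 \<le> n" "\<forall>i<n. d i \<le> 0"
  shows "\<exists>c. \<forall>i<n. Rv n d (Rv n d y) i = c"
proof -
  have fin: "finite (y ` {..<n})" "y ` {..<n} \<noteq> {}" using assms(1) by (auto simp: lessThan_empty_iff)
  define M where "M = Max (y ` {..<n})"
  obtain p where p: "p < n" "y p = M" using Max_in[OF fin] M_def by auto
  have yM: "y j \<le> M" if "j < n" for j using fin that M_def by auto
  define z where "z = Rv n d y"
  have z1: "z i \<le> M" if "i < n" for i
  proof -
    have "d i + y i \<le> M" using assms(2) yM that by force
    thus ?thesis unfolding z_def using that yM by (intro Rv_le) auto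
  qed
  have z2: "z i = M" if "i < n" "i \<noteq> p" for i
    using z1[OF that(1)] Rv_off[of p n i y d] p that unfolding z_def by linarith
  have "Rv n d z i = M" if "i < n" for i
  proof (rule Rv_eqI[OF that])
    show "d i + z i \<le> M" using z1[OF that] assms(2) that by force
    show "\<forall>j<n. j \<noteq> i \<longrightarrow> z j \<le> M" using z1 by auto
    obtain j where j: "j < 3" "j \<noteq> i" "j \<noteq> p"
    proof (cases "i \<noteq> 0 \<and> p \<noteq> 0")
      case True thus ?thesis using that[of 0] by auto
    next
      case False
      show ?thesis
      proof (cases "i \<noteq> 1 \<and> p \<noteq> 1")
        case True thus ?thesis using that[of 1] by auto
      next
        case False2: False
        thus ?thesis using False that[of 2] by auto
      qed
    qed
    thus "d i + z i = M \<or> (\<exists>j<n. j \<noteq> i \<and> z j = M)" using z2 assms(1)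
      by (metis order_less_le_trans)
  qed
  thus ?thesis unfolding z_def by blast
qed

lemma Q_step:
  assumes "m < n" "d m = L" "0 \<le> L" "\<forall>i<n. d i \<le> L"
    and Q: "\<forall>i<n. d i = L \<longrightarrow> z i \<le> z m"
  shows "\<forall>i<n. d i = L \<longrightarrow> Rv n d z i \<le> Rv n d z m"
proof (intro allI impI)
  fix i assume i: "i < n" "d i = L"
  show "Rv n d z i \<le> Rv n d z m"
  proof (rule Rv_le[OF i(1)])
    show "d i + z i \<le> Rv n d z m" using Rv_diag[OF assms(1), of d z] Q i assms by force
    show "\<forall>j<n. j \<noteq> i \<longrightarrow> z j \<le> Rv n d z m"
    proof (intro allI impI)
      fix j assume j: "j < n" "j \<noteq> i"
      show "z j \<le> Rv n d z m"
      proof (cases "j = m")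
        case True thus ?thesis using Rv_diag[OF assms(1), of d z] assms by simp
      qed (use Rv_off[of j n m z d] j in auto)
    qed
  qed
qed

lemma gap_step:
  assumes "m < n" "d m = L" "0 \<le> L" "\<forall>i<n. d i \<le> L"
    and Q: "\<forall>i<n. d i = L \<longrightarrow> z i \<le> z m"
    and g: "0 \<le> g" "\<forall>j<n. z j \<le> z m + g"
    and dl: "0 < \<delta>" "\<forall>i<n. 0 < d i \<and> d i < L \<longrightarrow> \<delta> \<le> L - d i"
  shows "\<forall>i<n. Rv n d z i \<le> Rv n d z m + max 0 (g - \<delta>)"
proof (intro allI impI)
  fix i assume i: "i < n"
  have Rm: "L + z m \<le> Rv n d z m" using Rv_diag[OF assms(1), of d z] assms by simp
  show "Rv n d z i \<le> Rv n d z m + max 0 (g - \<delta>)"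
  proof (cases "d i = L")
    case True
    thus ?thesis using Q_step[OF assms(1-5)] i by force
  next
    case False
    hence im: "i \<noteq> m" using assms by auto
    show ?thesis
    proof (rule Rv_le[OF i])
      show "d i + z i \<le> Rv n d z m + max 0 (g - \<delta>)"
      proof (cases "d i \<le> 0")
        case True
        thus ?thesis using Rv_off[of i n m z d] i im by simp
      next
        case False
        have "d i < L" using \<open>d i \<noteq> L\<close> assms(4) i by force
        hence "\<delta> \<le> L - d i" using dl False i by auto
        moreover have "z i \<le> z m + g" using g(2) i by blast
        ultimately show ?thesis using Rm by (smt (verit))
      qed
      show "\<forall>j<n. j \<noteq> i \<longrightarrow> z j \<le> Rv n d z m + max 0 (g - \<delta>)"
      proof (intro allI impI)
        fix j assume j: "j < n" "j \<noteq> i"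
        show "z j \<le> Rv n d z m + max 0 (g - \<delta>)"
        proof (cases "j = m")
          case True thus ?thesis using Rm assms(3) by simp
        qed (use Rv_off[of j n m z d] j in auto)
      qed
    qed
  qed
qed

lemma gap_iter:
  assumes "m < n" "d m = L" "0 \<le> L" "\<forall>i<n. d i \<le> L"
    and Q: "\<forall>i<n. d i = L \<longrightarrow> z i \<le> z m"
    and g: "0 \<le> g" "\<forall>j<n. z j \<le> z m + g"
    and dl: "0 < \<delta>" "\<forall>i<n. 0 < d i \<and> d i < L \<longrightarrow> \<delta> \<le> L - d i"
  shows "(\<forall>i<n. d i = L \<longrightarrow> (Rv n d ^^ k) z i \<le> (Rv n d ^^ k) z m)
       \<and> (\<forall>j<n. (Rv n d ^^ k) z j \<le> (Rv n d ^^ k) z m + max 0 (g - real k * \<delta>))"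
proof (induction k)
  case 0 thus ?case using Q g by simp
next
  case (Suc k)
  let ?z = "(Rv n d ^^ k) z"
  have 1: "\<forall>i<n. d i = L \<longrightarrow> Rv n d ?z i \<le> Rv n d ?z m"
    using Q_step[OF assms(1-4)] Suc by blast
  have 2: "\<forall>i<n. Rv n d ?z i \<le> Rv n d ?z m + max 0 (max 0 (g - real k * \<delta>) - \<delta>)"
    using gap_step[OF assms(1-4) _ _ _ dl] Suc by auto
  have "max 0 (max 0 (g - real k * \<delta>) - \<delta>) = max 0 (g - real (Suc k) * \<delta>)"
    using dl(1) by (simp add: algebra_simps max_def)
  thus ?case using 1 2 by simp
qed

lemma reachP:
  assumes "m < n" "d m = L" "0 \<le> L" "\<forall>i<n. d i \<le> L"
    and Q: "\<forall>i<n. d i = L \<longrightarrow> z i \<le> z m"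
  shows "\<exists>k. \<forall>j<n. (Rv n d ^^ k) z j \<le> (Rv n d ^^ k) z m"
proof -
  define g where "g = (\<Sum>j<n. \<bar>z j - z m\<bar>)"
  have g0: "0 \<le> g" unfolding g_def by (rule sum_nonneg) simp
  have gj: "\<forall>j<n. z j \<le> z m + g"
  proof (intro allI impI)
    fix j assume "j < n"
    hence "\<bar>z j - z m\<bar> \<le> g" unfolding g_def
      by (intro member_le_sum[where f="\<lambda>j. \<bar>z j - z m\<bar>"]) auto
    thus "z j \<le> z m + g" by linarith
  qed
  define D where "D = {L - d i | i. i < n \<and> 0 < d i \<and> d i < L}"
  have finD: "finite D" unfolding D_def by simp
  define \<delta> where "\<delta> = Min (insert 1 D)"
  have d0: "0 < \<delta>" unfolding \<delta>_def using finD by (subst Min_gr_iff) (auto simp: D_def)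
  have dl: "\<forall>i<n. 0 < d i \<and> d i < L \<longrightarrow> \<delta> \<le> L - d i"
    unfolding \<delta>_def using finD by (auto simp: D_def intro!: Min_le)
  obtain k :: nat where k: "g / \<delta> \<le> real k" using real_arch_simple by blast
  hence "g \<le> real k * \<delta>" using d0 by (simp add: field_simps)
  hence "max 0 (g - real k * \<delta>) = 0" by simp
  thus ?thesis using gap_iter[OF assms g0 gj d0 dl, of k] by auto
qed

lemma closed_form:
  assumes "m < n" "d m = L" "0 \<le> L" "\<forall>i<n. d i \<le> L"
    and P: "\<forall>j<n. w j \<le> w m"
  shows "(Rv n d ^^ Suc k) w m = w m + (real k + 1) * L
       \<and> (\<forall>i<n. i \<noteq> m \<longrightarrow> (Rv n d ^^ Suc k) w i = max (w i + (real k + 1) * d i) (w m + real k * L))"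
proof (induction k)
  case 0
  have "Rv n d w m = w m + L"
    using assms by (intro Rv_eqI) auto
  moreover have "Rv n d w i = max (w i + d i) (w m)" if "i < n" "i \<noteq> m" for i
    using assms that by (intro Rv_eqI) (auto simp: max_def)
  ultimately show ?case by simp
next
  case (Suc k)
  let ?z = "(Rv n d ^^ Suc k) w"
  have zm: "?z m = w m + (real k + 1) * L" using Suc by blast
  have zi: "?z i = max (w i + (real k + 1) * d i) (w m + real k * L)" if "i < n" "i \<noteq> m" for i
    using Suc that by blast
  have kd: "real k * d i \<le> real k * L" if "i < n" for i
    using assms(4) that by (intro mult_left_mono) auto
  have zle: "?z p \<le> w m + (real k + 1) * L" if "p < n" for p
  proof (cases "p = m")
    case False
    have "w p + (real k + 1) * d p \<le> w m + (real k + 1) * L"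
      using kd[OF that] P assms(4) that by (simp add: algebra_simps) (smt (verit))
    moreover have "real k * L \<le> (real k + 1) * L" using assms(3) by (simp add: algebra_simps)
    ultimately show ?thesis using zi[OF that False] by simp
  qed (use zm in simp)
  have A: "(Rv n d ^^ Suc (Suc k)) w m = w m + (real (Suc k) + 1) * L"
  proof -
    have "Rv n d ?z m = w m + (real (Suc k) + 1) * L"
    proof (rule Rv_eqI[OF assms(1)])
      show "d m + ?z m \<le> w m + (real (Suc k) + 1) * L" using zm assms by (simp add: algebra_simps)
      show "\<forall>j<n. j \<noteq> m \<longrightarrow> ?z j \<le> w m + (real (Suc k) + 1) * L"
      proof (intro allI impI)
        fix j assume "j < n" "j \<noteq> m"
        have "w m + (real k + 1) * L \<le> w m + (real (Suc k) + 1) * L" using assms(3) by (simp add: algebra_simps)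
        thus "?z j \<le> w m + (real (Suc k) + 1) * L" using zle[OF \<open>j < n\<close>] by linarith
      qed
      show "d m + ?z m = w m + (real (Suc k) + 1) * L \<or> (\<exists>j<n. j \<noteq> m \<and> ?z j = w m + (real (Suc k) + 1) * L)"
        using zm assms by (simp add: algebra_simps)
    qed
    thus ?thesis by simp
  qed
  have B: "(Rv n d ^^ Suc (Suc k)) w i = max (w i + (real (Suc k) + 1) * d i) (w m + real (Suc k) * L)"
    if i: "i < n" "i \<noteq> m" for i
  proof -
    let ?t = "max (w i + (real (Suc k) + 1) * d i) (w m + real (Suc k) * L)"
    have "Rv n d ?z i = ?t"
    proof (rule Rv_eqI[OF i(1)])
      have "d i + ?z i = max (w i + (real (Suc k) + 1) * d i) (w m + real k * L + d i)"
        using zi[OF i] by (simp add: algebra_simps max_add_distrib_right)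
      moreover have "w m + real k * L + d i \<le> w m + real (Suc k) * L"
        using assms(4) i by (simp add: algebra_simps)
      ultimately have "d i + ?z i \<le> ?t" and eq1: "w i + (real (Suc k) + 1) * d i \<ge> w m + real (Suc k) * L \<Longrightarrow> d i + ?z i = ?t"
        by auto
      thus "d i + ?z i \<le> ?t" by -
      show "\<forall>j<n. j \<noteq> i \<longrightarrow> ?z j \<le> ?t"
      proof (intro allI impI)
        fix j assume "j < n" "j \<noteq> i"
        have "w m + (real k + 1) * L \<le> ?t" by (simp add: algebra_simps)
        thus "?z j \<le> ?t" using zle[OF \<open>j < n\<close>] by linarith
      qed
      show "d i + ?z i = ?t \<or> (\<exists>j<n. j \<noteq> i \<and> ?z j = ?t)"
      proof (cases "w i + (real (Suc k) + 1) * d i \<ge> w m + real (Suc k) * L")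
        case True thus ?thesis using eq1 by blast
      next
        case False
        hence "?z m = ?t" using zm by simp
        thus ?thesis using i assms(1) by metis
      qed
    qed
    thus ?thesis by simp
  qed
  show ?case using A B by blast
qed




lemma eig_B:
  assumes "m < n" "d m = L" "0 \<le> L" "\<forall>i<n. d i \<le> L"
    and P: "\<forall>j<n. w j \<le> w m"
  shows "\<exists>j. \<forall>i<n. Rv n d ((Rv n d ^^ Suc j) w) i = L + (Rv n d ^^ Suc j) w i"
proof -
  define D where "D = {L - d i | i. i < n \<and> d i < L}"
  have finD: "finite D" unfolding D_def by simp
  define \<delta> where "\<delta> = Min (insert 1 D)"
  have d0: "0 < \<delta>" unfolding \<delta>_def using finD by (subst Min_gr_iff) (auto simp: D_def)
  have dl: "\<forall>i<n. d i < L \<longrightarrow> \<delta> \<le> L - d i"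
    unfolding \<delta>_def using finD by (auto simp: D_def intro!: Min_le)
  obtain j :: nat where "L / \<delta> \<le> real j" using real_arch_simple by blast
  hence jL: "L \<le> real j * \<delta>" using d0 by (simp add: field_simps)
  have cf: "(Rv n d ^^ Suc k) w m = w m + (real k + 1) * L
       \<and> (\<forall>i<n. i \<noteq> m \<longrightarrow> (Rv n d ^^ Suc k) w i = max (w i + (real k + 1) * d i) (w m + real k * L))" for k
    by (rule closed_form[OF assms])
  have "Rv n d ((Rv n d ^^ Suc j) w) i = L + (Rv n d ^^ Suc j) w i" if i: "i < n" for i
  proof -
    have e: "Rv n d ((Rv n d ^^ Suc j) w) i = (Rv n d ^^ Suc (Suc j)) w i" by simp
    show ?thesis
    proof (cases "i = m")
      case True
      thus ?thesis using cf[of j] cf[of "Suc j"] e by (simp add: algebra_simps)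
    next
      case False
      have A: "(Rv n d ^^ Suc (Suc j)) w i = max (w i + (real j + 2) * d i) (w m + (real j + 1) * L)"
        using cf[of "Suc j"] False i by (simp add: algebra_simps)
      have B: "(Rv n d ^^ Suc j) w i = max (w i + (real j + 1) * d i) (w m + real j * L)"
        using cf[of j] False i by simp
      show ?thesis
      proof (cases "d i = L")
        case True
        thus ?thesis using A B e by (simp add: algebra_simps max_add_distrib_right)
      next
        case False
        hence lt: "d i < L" using assms(4) i by force
        have "real j * \<delta> \<le> real j * (L - d i)" using dl lt i by (intro mult_left_mono) auto
        hence jd: "real j * d i \<le> real j * L - L" using jL by (simp add: algebra_simps)
        have wi: "w i \<le> w m" using P i by blast
        have 1: "w i + (real j + 2) * d i \<le> w m + (real j + 1) * L"
          using jd wi lt by (simp add: algebra_simps)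
        have 2: "L + (w i + (real j + 1) * d i) \<le> w m + (real j + 1) * L"
          using jd wi lt by (simp add: algebra_simps)
        have "Rv n d ((Rv n d ^^ Suc j) w) i = w m + (real j + 1) * L" using A e 1 by simp
        moreover have "L + (Rv n d ^^ Suc j) w i = w m + (real j + 1) * L"
          using B 2 by (simp add: algebra_simps max_def)
        ultimately show ?thesis by simp
      qed
    qed
  qed
  thus ?thesis by blast
qed

lemma all_eps_eigen:
  assumes "0 < n" "x \<in> mp_vecs n" "\<forall>p<n. x p = -\<infinity>"
  shows "x \<in> eigenspace n A"
proof -
  have "mp_apply n (mp_of_real n A) x = (\<lambda>_. -\<infinity>)"
  proof
    fix i
    show "mp_apply n (mp_of_real n A) x i = -\<infinity>"
    proof (cases "i < n")
      case True
      have "(\<lambda>j. mp_of_real n A i j + x j) ` {..<n} = {-\<infinity>}"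
        using assms True by (auto simp: mp_of_real_def)
      thus ?thesis using True by (simp add: mp_apply_def)
    qed (simp add: mp_apply_def)
  qed
  moreover have "mp_scale n c x = (\<lambda>_. -\<infinity>)" for c
    using assms by (auto simp: mp_scale_def mp_vecs_def)
  ultimately show ?thesis using assms by (simp add: eigenspace_def)
qed

lemma general_stable:
  assumes n: "2 \<le> n" and mono: "\<forall>i j. i \<le> j \<longrightarrow> j < n \<longrightarrow> d i \<le> d j"
    and ne: "\<not> (n = 2 \<and> d 1 < 0)"
    and x: "x \<in> mp_vecs n"
  shows "\<exists>k. mp_apply n (mp_mat_pow n (pdiag d) k) x \<in> eigenspace n (pdiag d)"
proof -
  let ?T = "mp_apply n (mp_of_real n (pdiag d))"
  have n0: "0 < n" using n by simp
  have pw: "mp_apply n (mp_mat_pow n (pdiag d) k) x = (?T ^^ k) x" for k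
    by (rule mp_apply_pow[OF n0 x])
  have L: "mcm n (pdiag d) = max (d (n-1)) 0" by (rule mcm_pdiag[OF n mono])
  have dle: "\<forall>i<n. d i \<le> d (n-1)" using mono by auto
  show ?thesis
  proof (cases "\<forall>p<n. x p = -\<infinity>")
    case True
    hence "x \<in> eigenspace n (pdiag d)" using all_eps_eigen[OF n0 x] by blast
    thus ?thesis using pw[of 0] by (intro exI[of _ 0]) simp
  next
    case False
    then obtain p where p: "p < n" "x p \<noteq> -\<infinity>" by blast
    define y0 where "y0 = (\<lambda>i. real_of_ereal (?T x i))"
    have Tx: "?T x = Ev n y0" unfolding y0_def by (rule apply_to_real[OF n x p])
    have it: "(?T ^^ Suc k) x = Ev n ((Rv n d ^^ k) y0)" for k
      by (simp only: funpow_Suc_right o_apply Tx funpow_Ev)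
    show ?thesis
    proof (cases "d (n-1) < 0")
      case True
      hence n3: "3 \<le> n" using ne n mono by (cases "n = 2") auto
      have d0: "\<forall>i<n. d i \<le> 0" using dle True by force
      obtain c where c: "\<forall>i<n. Rv n d (Rv n d y0) i = c" using caseA[OF n3 d0] by blast
      have "\<forall>i<n. Rv n d (Rv n d (Rv n d y0)) i = c" using Rv_const[OF n d0 c] .
      hence "\<forall>i<n. Rv n d ((Rv n d ^^ 2) y0) i = mcm n (pdiag d) + (Rv n d ^^ 2) y0 i"
        using c L True by (simp add: numeral_2_eq_2)
      hence "(?T ^^ 3) x \<in> eigenspace n (pdiag d)"
        using it[of 2] Ev_eigen by (simp add: numeral_3_eq_3 numeral_2_eq_2)
      thus ?thesis using pw by metis
    next
      case False
      define L where "L = d (n-1)"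
      have L': "mcm n (pdiag d) = L" using L False by (simp add: L_def)
      have L0: "0 \<le> L" using False L_def by simp
      have dL: "\<forall>i<n. d i \<le> L" using dle L_def by simp
      define S where "S = {i. i < n \<and> d i = L}"
      have finS: "finite S" "S \<noteq> {}" using n by (auto simp: S_def L_def intro!: exI[of _ "n-1"])
      have "Max (y0 ` S) \<in> y0 ` S" using finS by (intro Max_in) auto
      then obtain m where m: "m \<in> S" "y0 m = Max (y0 ` S)" by (metis imageE)
      have mn: "m < n" "d m = L" using m by (auto simp: S_def)
      have Q: "\<forall>i<n. d i = L \<longrightarrow> y0 i \<le> y0 m" using m finS by (auto simp: S_def)
      obtain k1 where k1: "\<forall>j<n. (Rv n d ^^ k1) y0 j \<le> (Rv n d ^^ k1) y0 m"
        using reachP[OF mn L0 dL Q] by blast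
      obtain j where j: "\<forall>i<n. Rv n d ((Rv n d ^^ Suc j) ((Rv n d ^^ k1) y0)) i
                             = L + (Rv n d ^^ Suc j) ((Rv n d ^^ k1) y0) i"
        using eig_B[OF mn L0 dL k1] by blast
      have "(Rv n d ^^ Suc j) ((Rv n d ^^ k1) y0) = (Rv n d ^^ (Suc j + k1)) y0"
        by (simp add: funpow_add)
      hence "Ev n ((Rv n d ^^ (Suc j + k1)) y0) \<in> eigenspace n (pdiag d)"
        using j L' Ev_eigen by metis
      hence "(?T ^^ Suc (Suc j + k1)) x \<in> eigenspace n (pdiag d)" using it by metis
      thus ?thesis using pw by metis
    qed
  qed
qed




lemma apply2:
  "mp_apply 2 A x = (\<lambda>i. if i < 2 then max (A i 0 + x 0) (A i 1 + x 1) else -\<infinity>)"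
proof -
  have "{..<2::nat} = {0,1}" by auto
  thus ?thesis by (auto simp: mp_apply_def fun_eq_iff)
qed

lemma mpv2: "x \<in> mp_vecs 2 \<longleftrightarrow> x 0 \<noteq> \<infinity> \<and> x 1 \<noteq> \<infinity> \<and> (\<forall>i. 2 \<le> i \<longrightarrow> x i = -\<infinity>)"
  by (auto simp: mp_vecs_def less_2_cases_iff)

lemma caseC_eigen:
  assumes "d 0 < 0" "d 1 < 0" "x \<in> mp_vecs 2" "d 0 \<le> d 1"
  shows "x \<in> eigenspace 2 (pdiag d) \<longleftrightarrow> x 0 = x 1"
proof -
  have "\<forall>i j. i \<le> j \<longrightarrow> j < 2 \<longrightarrow> d i \<le> d j"
    using assms(4) by (auto simp: less_2_cases_iff le_Suc_eq)
  hence L: "mcm 2 (pdiag d) = 0" using mcm_pdiag[of 2 d] assms by simp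
  have x0: "x 0 \<noteq> \<infinity>" "x 1 \<noteq> \<infinity>" and x2: "\<forall>i. 2 \<le> i \<longrightarrow> x i = -\<infinity>" using assms(3) mpv2 by auto
  have sc: "mp_scale 2 0 x = x" using x2 by (auto simp: mp_scale_def fun_eq_iff)
  have ap: "mp_apply 2 (mp_of_real 2 (pdiag d)) x = x \<longleftrightarrow>
      max (ereal (d 0) + x 0) (x 1) = x 0 \<and> max (x 0) (ereal (d 1) + x 1) = x 1"
    using x2 by (auto simp: apply2 mp_of_real_def pdiag_def fun_eq_iff less_2_cases_iff zero_ereal_def)
  have "(max (ereal (d 0) + x 0) (x 1) = x 0 \<and> max (x 0) (ereal (d 1) + x 1) = x 1) \<longleftrightarrow> x 0 = x 1"
    using x0 assms(1,2) by (cases "x 0"; cases "x 1") (auto simp: max_def)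
  thus ?thesis using ap sc L assms(3) by (simp add: eigenspace_def)
qed

lemma caseC_step:
  assumes "d 0 < 0" "d 1 < 0" "x \<in> mp_vecs 2" "x 0 \<noteq> x 1"
  shows "mp_apply 2 (mp_of_real 2 (pdiag d)) x \<in> mp_vecs 2
       \<and> mp_apply 2 (mp_of_real 2 (pdiag d)) x 0 \<noteq> mp_apply 2 (mp_of_real 2 (pdiag d)) x 1"
proof -
  have x0: "x 0 \<noteq> \<infinity>" "x 1 \<noteq> \<infinity>" using assms(3) mpv2 by auto
  have "max (ereal (d 0) + x 0) (x 1) \<noteq> \<infinity> \<and> max (x 0) (ereal (d 1) + x 1) \<noteq> \<infinity>
        \<and> max (ereal (d 0) + x 0) (x 1) \<noteq> max (x 0) (ereal (d 1) + x 1)"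
    using x0 assms(1,2,4) by (cases "x 0"; cases "x 1") (auto simp: max_def)
  thus ?thesis by (simp add: mpv2 apply2 mp_of_real_def pdiag_def)
qed

lemma caseC_attr:
  assumes "d 0 \<le> d 1" "d 1 < 0"
  shows "attr 2 (pdiag d) = {x \<in> mp_vecs 2. x 0 = x 1}"
proof -
  have d0: "d 0 < 0" using assms by simp
  let ?T = "mp_apply 2 (mp_of_real 2 (pdiag d))"
  have pw: "x \<in> mp_vecs 2 \<Longrightarrow> mp_apply 2 (mp_mat_pow 2 (pdiag d) k) x = (?T ^^ k) x" for x k
    by (rule mp_apply_pow) auto
  show ?thesis
  proof
    show "attr 2 (pdiag d) \<subseteq> {x \<in> mp_vecs 2. x 0 = x 1}"
    proof
      fix x assume "x \<in> attr 2 (pdiag d)"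
      then obtain k where x: "x \<in> mp_vecs 2" and k: "(?T ^^ k) x \<in> eigenspace 2 (pdiag d)"
        using pw by (auto simp: attr_def)
      show "x \<in> {x \<in> mp_vecs 2. x 0 = x 1}"
      proof (rule ccontr)
        assume "x \<notin> {x \<in> mp_vecs 2. x 0 = x 1}"
        hence ne: "x 0 \<noteq> x 1" using x by simp
        have "(?T ^^ k) x \<in> mp_vecs 2 \<and> (?T ^^ k) x 0 \<noteq> (?T ^^ k) x 1" for k
          by (induction k) (use x ne caseC_step[OF d0 assms(2)] in auto)
        thus False using k caseC_eigen[OF d0 assms(2) _ assms(1)] by blast
      qed
    qed
    show "{x \<in> mp_vecs 2. x 0 = x 1} \<subseteq> attr 2 (pdiag d)"
    proof
      fix x assume "x \<in> {x \<in> mp_vecs 2. x 0 = x 1}"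
      hence x: "x \<in> mp_vecs 2" "x 0 = x 1" by auto
      hence "mp_apply 2 (mp_mat_pow 2 (pdiag d) 0) x \<in> eigenspace 2 (pdiag d)"
        using pw[of x 0] caseC_eigen[OF d0 assms(2) _ assms(1)] by simp
      thus "x \<in> attr 2 (pdiag d)" using x unfolding attr_def by blast
    qed
  qed
qed

theorem corollary4p9:
  fixes n :: nat and d :: "nat \<Rightarrow> real"
  assumes "n \<ge> 2"
    and "\<forall>i j. i \<le> j \<longrightarrow> j < n \<longrightarrow> d i \<le> d j"
  shows "(n = 2 \<and> d 1 < 0 \<longrightarrow>
            attr n (pdiag d) = {x \<in> mp_vecs n. x 0 = x 1} \<and> \<not> strongly_stable n (pdiag d))
       \<and> (\<not> (n = 2 \<and> d 1 < 0) \<longrightarrow> strongly_stable n (pdiag d))"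
proof (intro conjI impI)
  assume h: "n = 2 \<and> d 1 < 0"
  hence d01: "d 0 \<le> d 1" using assms(2) by auto
  show A: "attr n (pdiag d) = {x \<in> mp_vecs n. x 0 = x 1}" using caseC_attr[OF d01] h by simp
  define x :: "nat \<Rightarrow> ereal" where "x = (\<lambda>i. if i = 0 then 0 else -\<infinity>)"
  have "x \<in> mp_vecs n" "x 0 \<noteq> x 1" using h by (auto simp: x_def mp_vecs_def)
  thus "\<not> strongly_stable n (pdiag d)" using A by (auto simp: strongly_stable_def)
next
  assume "\<not> (n = 2 \<and> d 1 < 0)"
  thus "strongly_stable n (pdiag d)"
    using general_stable[OF assms] by (auto simp: strongly_stable_def attr_def)
qed


end
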